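(* Let $(M,d)$ be a metric space, $\mathsf{P}\subseteq M$ a set of $n$ points, and $1\le \ell\le k\le n$ integers; put $m=\lfloor k/\ell\rfloor$. Let $c\ge 1$ and let $Q=\{q_1,\dots,q_m\}\subseteq \mathsf{P}$ be a set of $m$ points that is a $c$-approximate solution to the (non-fault-tolerant) $m$-median problem on $\mathsf{P}$, i.e. $\sum_{p\in\mathsf{P}} d_Q(p,1)\le c\cdot \sigma_{\mathrm{med}}$, where $\sigma_{\mathrm{med}}=\min_{S\subseteq\mathsf{P},|S|=m}\sum_{p\in\mathsf{P}} d_S(p,1)$. Let $C\subseteq\mathsf{P}$ be any set with $|C|=k$ and $C\supseteq \bigcup_{i=1}^m N_{\mathsf{P}}(q_i,\ell)$. Then $$\sum_{p\in\mathsf{P}} d_C(p,\ell)\;\le\;(1+4c)\,\sigma_{\mathrm{opt}},\qquad\text{where } \sigma_{\mathrm{opt}}=\min_{C'\subseteq\mathsf{P},\,|C'|=k}\ \sum_{p\in\mathsf{P}} d_{C'}(p,\ell).$$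
   Context: For a finite set $S\subseteq M$, a point $p\in M$ and an integer $1\le i\le |S|$, $d_S(p,i)$ denotes the radius of the smallest closed ball centered at $p$ containing at least $i$ points of $S$ (the distance from $p$ to its $i$-th nearest neighbor in $S$). The $i$ nearest neighbors of $p$ in $S$ are determined by ordering the points $s\in S$ lexicographically by the pair $(d(p,s),\text{index of } s)$ (points of $\mathsf{P}=\{p_1,\dots,p_n\}$ are indexed), so they are unique; $N_S(p,i)$ denotes the set of the first $i$ points in this order, so $|N_S(p,i)|=i$. The fault-tolerant $k$-median cost of $C$ is $\sum_{p\in\mathsf{P}} d_C(p,\ell)$; the case $\ell=1$ is ordinary $k$-median. *)

theory Defs
  imports Complex_Main
begin

definition kdist :: "'a::metric_space set \<Rightarrow> 'a \<Rightarrow> nat \<Rightarrow> real" where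
  "kdist S p i = Inf {r. 0 \<le> r \<and> card {s \<in> S. dist p s \<le> r} \<ge> i}"

definition nn_before :: "('a \<Rightarrow> nat) \<Rightarrow> 'a::metric_space \<Rightarrow> 'a \<Rightarrow> 'a \<Rightarrow> bool" where
  "nn_before ix p t s \<longleftrightarrow> dist p t < dist p s \<or> (dist p t = dist p s \<and> ix t < ix s)"

definition nnset :: "('a \<Rightarrow> nat) \<Rightarrow> 'a::metric_space set \<Rightarrow> 'a \<Rightarrow> nat \<Rightarrow> 'a set" where
  "nnset ix S p i = {s \<in> S. card {t \<in> S. nn_before ix p t s} < i}"

definition ftcost :: "'a::metric_space set \<Rightarrow> 'a set \<Rightarrow> nat \<Rightarrow> real" where
  "ftcost P C l = (\<Sum>p\<in>P. kdist C p l)"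

end

theory Submission
  imports Defs
begin

lemma kdist_le:
  assumes "0 \<le> r" "i \<le> card {s\<in>S. dist p s \<le> r}"
  shows "kdist S p i \<le> r"
  unfolding kdist_def
  by (rule cInf_lower) (use assms in \<open>auto intro!: bdd_belowI[of _ 0]\<close>)

lemma kdist_attain:
  assumes "finite S" "i \<le> card S"
  shows "0 \<le> kdist S p i \<and> i \<le> card {s\<in>S. dist p s \<le> kdist S p i}"
proof -
  define R where "R = {r. 0 \<le> r \<and> i \<le> card {s\<in>S. dist p s \<le> r}}"
  define D where "D = insert 0 ((\<lambda>s. dist p s) ` S)"
  have fD: "finite D" using assms(1) by (simp add: D_def)
  have key: "\<exists>r'\<in>D\<inter>R. r' \<le> r" if "r \<in> R" for r
  proof -
    define r' where "r' = Max {d\<in>D. d \<le> r}"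
    have r0: "0 \<le> r" using that by (simp add: R_def)
    have fin: "finite {d\<in>D. d \<le> r}" using fD by simp
    have ne: "0 \<in> {d\<in>D. d \<le> r}" using r0 by (simp add: D_def)
    have "r' \<in> {d\<in>D. d \<le> r}" unfolding r'_def using fin ne by (intro Max_in) auto
    hence a: "r' \<in> D" "r' \<le> r" by auto
    have b: "0 \<le> r'" unfolding r'_def using fin ne by (rule Max_ge)
    have "{s\<in>S. dist p s \<le> r'} = {s\<in>S. dist p s \<le> r}"
    proof
      show "{s\<in>S. dist p s \<le> r'} \<subseteq> {s\<in>S. dist p s \<le> r}" using a by auto
      show "{s\<in>S. dist p s \<le> r} \<subseteq> {s\<in>S. dist p s \<le> r'}"
      proof
        fix s assume s: "s \<in> {s\<in>S. dist p s \<le> r}"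
        hence "dist p s \<in> {d\<in>D. d \<le> r}" by (auto simp: D_def)
        hence "dist p s \<le> r'" unfolding r'_def by (rule Max_ge[OF fin])
        thus "s \<in> {s\<in>S. dist p s \<le> r'}" using s by auto
      qed
    qed
    hence "r' \<in> R" using that b by (simp add: R_def)
    thus ?thesis using a by blast
  qed
  have "Max D \<in> R"
  proof -
    have "{s\<in>S. dist p s \<le> Max D} = S" using fD by (auto simp: D_def intro!: Max_ge)
    moreover have "0 \<le> Max D" using fD by (auto simp: D_def intro!: Max_ge)
    ultimately show ?thesis using assms by (simp add: R_def)
  qed
  then obtain r0 where r0: "r0 \<in> D \<inter> R" using key by blast
  define x where "x = Min (D \<inter> R)"
  have fDR: "finite (D \<inter> R)" using fD by simp
  have xin: "x \<in> D \<inter> R" unfolding x_def using fDR r0 by (intro Min_in) auto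
  have "kdist S p i = Inf R" by (simp add: kdist_def R_def)
  also have "Inf R = x"
  proof (rule antisym)
    show "Inf R \<le> x" using xin by (intro cInf_lower) (auto simp: R_def intro!: bdd_belowI[of _ 0])
    show "x \<le> Inf R"
    proof (rule cInf_greatest)
      show "R \<noteq> {}" using r0 by auto
      fix r assume "r \<in> R"
      then obtain r' where "r' \<in> D \<inter> R" "r' \<le> r" using key by blast
      moreover have "x \<le> r'" unfolding x_def using fDR \<open>r' \<in> D \<inter> R\<close> by (rule Min_le)
      ultimately show "x \<le> r" by linarith
    qed
  qed
  finally show ?thesis using xin by (simp add: R_def)
qed

lemma kdist_mono:
  assumes "finite T" "S \<subseteq> T" "i \<le> card S"
  shows "kdist T p i \<le> kdist S p i"
proof -
  have fS: "finite S" using assms finite_subset by blast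
  have h: "0 \<le> kdist S p i \<and> i \<le> card {s\<in>S. dist p s \<le> kdist S p i}"
    using kdist_attain[OF fS assms(3)] .
  have "card {s\<in>S. dist p s \<le> kdist S p i} \<le> card {s\<in>T. dist p s \<le> kdist S p i}"
    using assms by (intro card_mono) auto
  thus ?thesis using h by (intro kdist_le) auto
qed

lemma kdist_tri:
  assumes "finite S" "i \<le> card S"
  shows "kdist S q i \<le> dist q p + kdist S p i"
proof -
  have h: "0 \<le> kdist S p i \<and> i \<le> card {s\<in>S. dist p s \<le> kdist S p i}"
    using kdist_attain[OF assms] .
  have "card {s\<in>S. dist p s \<le> kdist S p i} \<le> card {s\<in>S. dist q s \<le> dist q p + kdist S p i}"
    using assms(1) by (intro card_mono) (auto intro: order_trans[OF dist_triangle[of q _ p]])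
  thus ?thesis using h by (intro kdist_le) auto
qed

lemma nnset_props:
  assumes "finite P" "inj_on ix P" "l \<le> card P"
  shows "l \<le> card (nnset ix P q l) \<and> (\<forall>s\<in>nnset ix P q l. dist q s \<le> kdist P q l)"
proof -
  define f where "f s = card {t\<in>P. nn_before ix q t s}" for s
  have lt: "f s < f s'" if "s \<in> P" "s' \<in> P" "nn_before ix q s s'" for s s'
  proof -
    have "{t\<in>P. nn_before ix q t s} \<subset> {t\<in>P. nn_before ix q t s'}"
      using that by (auto simp: nn_before_def)
    thus ?thesis unfolding f_def using assms(1) by (intro psubset_card_mono) auto
  qed
  have tot: "nn_before ix q s s' \<or> nn_before ix q s' s" if "s \<in> P" "s' \<in> P" "s \<noteq> s'" for s s'
    using that assms(2) unfolding nn_before_def inj_on_def by (metis linorder_neqE_linordered_idom nat_neq_iff)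
  have inj: "inj_on f P"
    unfolding inj_on_def using lt tot by (metis less_irrefl)
  have rng: "f ` P \<subseteq> {..<card P}"
  proof
    fix y assume "y \<in> f ` P"
    then obtain s where s: "s \<in> P" "y = f s" by auto
    have "{t\<in>P. nn_before ix q t s} \<subseteq> P - {s}" by (auto simp: nn_before_def)
    hence "f s \<le> card (P - {s})" unfolding f_def using assms(1) by (intro card_mono) auto
    also have "\<dots> < card P" using s assms(1) by (intro card_Diff1_less)
    finally show "y \<in> {..<card P}" using s by simp
  qed
  have fP: "f ` P = {..<card P}"
    using rng inj by (intro card_subset_eq) (auto simp: card_image)
  have N: "nnset ix P q l = {s\<in>P. f s < l}" by (simp add: nnset_def f_def)
  have "f ` nnset ix P q l = {..<l}"
  proof
    show "f ` nnset ix P q l \<subseteq> {..<l}" using N by auto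
    show "{..<l} \<subseteq> f ` nnset ix P q l"
    proof
      fix y assume "y \<in> {..<l}"
      hence "y \<in> f ` P" using fP assms(3) by auto
      then obtain s where "s \<in> P" "y = f s" by auto
      thus "y \<in> f ` nnset ix P q l" using N \<open>y \<in> {..<l}\<close> by auto
    qed
  qed
  moreover have "inj_on f (nnset ix P q l)" using inj N by (auto intro: inj_on_subset)
  ultimately have c1: "card (nnset ix P q l) = l" by (metis card_image card_lessThan)
  have c2: "dist q s \<le> kdist P q l" if s: "s \<in> nnset ix P q l" for s
  proof (rule ccontr)
    assume "\<not> ?thesis"
    hence "{t\<in>P. dist q t \<le> kdist P q l} \<subseteq> {t\<in>P. nn_before ix q t s}"
      by (auto simp: nn_before_def)
    hence "card {t\<in>P. dist q t \<le> kdist P q l} \<le> card {t\<in>P. nn_before ix q t s}"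
      using assms(1) by (intro card_mono) auto
    moreover have "l \<le> card {t\<in>P. dist q t \<le> kdist P q l}" using kdist_attain[OF assms(1,3)] by blast
    moreover have "card {t\<in>P. nn_before ix q t s} < l" using s by (simp add: nnset_def)
    ultimately show False by linarith
  qed
  show ?thesis using c1 c2 by simp
qed

lemma greedy:
  fixes r :: "'a \<Rightarrow> real" and B :: "'a \<Rightarrow> 'b set"
  assumes "finite A" "\<forall>p\<in>A. B p \<noteq> {}"
  shows "\<exists>T\<subseteq>A. (\<forall>t1\<in>T. \<forall>t2\<in>T. t1 \<noteq> t2 \<longrightarrow> B t1 \<inter> B t2 = {}) \<and>
           (\<forall>p\<in>A. \<exists>t\<in>T. r t \<le> r p \<and> B t \<inter> B p \<noteq> {})"
  using assms
proof (induction "card A" arbitrary: A rule: less_induct)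
  case less
  show ?case
  proof (cases "A = {}")
    case True thus ?thesis by auto
  next
    case False
    define a where "a = arg_min_on r A"
    have a1: "a \<in> A" "\<not>(\<exists>x\<in>A. r x < r a)"
      unfolding a_def using arg_min_if_finite[OF less.prems(1) False] by auto
    have a: "a \<in> A" "\<forall>p\<in>A. r a \<le> r p" using a1 by (auto simp: not_less)
    define A' where "A' = {p\<in>A. B p \<inter> B a = {}}"
    have sub: "A' \<subset> A" using a less.prems(2) by (auto simp: A'_def)
    hence "card A' < card A" using less.prems(1) by (simp add: psubset_card_mono)
    moreover have "finite A'" using less.prems(1) by (simp add: A'_def)
    moreover have "\<forall>p\<in>A'. B p \<noteq> {}" using less.prems(2) sub by blast
    ultimately have "\<exists>T\<subseteq>A'. (\<forall>t1\<in>T. \<forall>t2\<in>T. t1 \<noteq> t2 \<longrightarrow> B t1 \<inter> B t2 = {}) \<and>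
           (\<forall>p\<in>A'. \<exists>t\<in>T. r t \<le> r p \<and> B t \<inter> B p \<noteq> {})" by (rule less.hyps)
    then obtain T' where T': "T' \<subseteq> A'"
      "\<forall>t1\<in>T'. \<forall>t2\<in>T'. t1 \<noteq> t2 \<longrightarrow> B t1 \<inter> B t2 = {}"
      "\<forall>p\<in>A'. \<exists>t\<in>T'. r t \<le> r p \<and> B t \<inter> B p \<noteq> {}"
      by blast
    have "insert a T' \<subseteq> A" using T'(1) sub a by auto
    moreover have "\<forall>t1\<in>insert a T'. \<forall>t2\<in>insert a T'. t1 \<noteq> t2 \<longrightarrow> B t1 \<inter> B t2 = {}"
      using T'(1,2) by (auto simp: A'_def)
    moreover have "\<forall>p\<in>A. \<exists>t\<in>insert a T'. r t \<le> r p \<and> B t \<inter> B p \<noteq> {}"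
    proof
      fix p assume p: "p \<in> A"
      show "\<exists>t\<in>insert a T'. r t \<le> r p \<and> B t \<inter> B p \<noteq> {}"
      proof (cases "p \<in> A'")
        case True thus ?thesis using T'(3) by blast
      next
        case False thus ?thesis using p a by (auto simp: A'_def)
      qed
    qed
    ultimately show ?thesis by blast
  qed
qed


theorem theorem1:
  fixes P Q C :: "'a::metric_space set" and ix :: "'a \<Rightarrow> nat"
    and l k :: nat and c :: real
  assumes "finite P" and "inj_on ix P"
    and "1 \<le> l" and "l \<le> k" and "k \<le> card P"
    and "c \<ge> 1"
    and "Q \<subseteq> P" and "card Q = k div l"
    and "ftcost P Q 1 \<le> c * Min {ftcost P S 1 | S. S \<subseteq> P \<and> card S = k div l}"
    and "C \<subseteq> P" and "card C = k"
    and "(\<Union>q\<in>Q. nnset ix P q l) \<subseteq> C"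
  shows "ftcost P C l \<le> (1 + 4 * c) * Min {ftcost P C' l | C'. C' \<subseteq> P \<and> card C' = k}"
proof -
  note fP = assms(1)
  define m where "m = k div l"
  have lpos: "0 < l" using assms(3) by simp
  have m1: "1 \<le> m" unfolding m_def using less_eq_div_iff_mult_less_eq[OF lpos, of 1 k] assms(4) by simp
  have mk: "m \<le> k" unfolding m_def by simp
  define F where "F = {ftcost P C' l | C'. C' \<subseteq> P \<and> card C' = k}"
  have F_eq: "F = (\<lambda>C'. ftcost P C' l) ` {C'. C' \<subseteq> P \<and> card C' = k}" unfolding F_def by auto
  have finF: "finite F" unfolding F_eq using fP by simp
  obtain C0 where "C0 \<subseteq> P" "card C0 = k" using obtain_subset_with_card_n[OF assms(5)] by blast
  hence "F \<noteq> {}" unfolding F_def by blast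
  hence "Min F \<in> F" using finF by (rule Min_in[rotated])
  then obtain Cs where Cs: "Cs \<subseteq> P" "card Cs = k" and OPT: "Min F = ftcost P Cs l"
    unfolding F_def by blast
  have fCs: "finite Cs" using Cs fP finite_subset by blast
  have lCs: "l \<le> card Cs" using Cs assms(4) by simp
  define G where "G = {ftcost P S 1 | S. S \<subseteq> P \<and> card S = k div l}"
  have G_eq: "G = (\<lambda>S. ftcost P S 1) ` {S. S \<subseteq> P \<and> card S = k div l}" unfolding G_def by auto
  have finG: "finite G" unfolding G_eq using fP by simp
  define r where "r p = kdist Cs p l" for p
  define B where "B p = {s\<in>Cs. dist p s \<le> r p}" for p
  have Bl: "l \<le> card (B p)" for p
    using kdist_attain[OF fCs lCs, of p] by (simp add: B_def r_def)
  have r0: "0 \<le> r p" for p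
    using kdist_attain[OF fCs lCs, of p] by (simp add: r_def)
  have Bne: "\<forall>p\<in>P. B p \<noteq> {}"
  proof
    fix p
    have "1 \<le> card (B p)" using Bl[of p] assms(3) by linarith
    thus "B p \<noteq> {}" by auto
  qed
  obtain T where T: "T \<subseteq> P" "\<forall>t1\<in>T. \<forall>t2\<in>T. t1 \<noteq> t2 \<longrightarrow> B t1 \<inter> B t2 = {}"
    "\<forall>p\<in>P. \<exists>t\<in>T. r t \<le> r p \<and> B t \<inter> B p \<noteq> {}"
    using greedy[OF fP Bne, of r] by blast
  have fT: "finite T" using T(1) fP finite_subset by blast
  have "card T * l = (\<Sum>t\<in>T. l)" by simp
  also have "\<dots> \<le> (\<Sum>t\<in>T. card (B t))" using Bl by (intro sum_mono) auto
  also have "\<dots> = card (\<Union>t\<in>T. B t)"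
    using fT T(2) by (intro card_UN_disjoint[symmetric]) (auto simp: B_def fCs)
  also have "\<dots> \<le> card Cs" using fCs by (intro card_mono) (auto simp: B_def)
  finally have "card T * l \<le> k" using Cs by simp
  hence Tm: "card T \<le> m" unfolding m_def using less_eq_div_iff_mult_less_eq[OF lpos] by simp
  obtain S where S: "T \<subseteq> S" "S \<subseteq> P" "card S = m"
    using exists_subset_between[OF Tm _ T(1) fP] mk assms(5) by fastforce
  have fS: "finite S" using S fP finite_subset by blast
  have Sb: "kdist S p 1 \<le> 2 * r p" if p: "p \<in> P" for p
  proof -
    obtain t where t: "t \<in> T" "r t \<le> r p" "B t \<inter> B p \<noteq> {}" using T(3) p by blast
    then obtain s where s: "s \<in> B t" "s \<in> B p" by blast
    have "1 \<le> card {s\<in>S. dist p s \<le> dist p t}"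
    proof -
      have "t \<in> {s\<in>S. dist p s \<le> dist p t}" using t S(1) by auto
      hence "{s\<in>S. dist p s \<le> dist p t} \<noteq> {}" by blast
      moreover have "finite {s\<in>S. dist p s \<le> dist p t}" using fS by simp
      ultimately show ?thesis by (simp add: Suc_le_eq card_gt_0_iff)
    qed
    hence "kdist S p 1 \<le> dist p t" by (intro kdist_le) auto
    also have "\<dots> \<le> dist p s + dist s t" by (rule dist_triangle)
    also have "\<dots> \<le> r p + r t" using s by (simp add: B_def dist_commute)
    finally show ?thesis using t by linarith
  qed
  have "Min G \<le> ftcost P S 1" unfolding G_def using S finG m_def by (intro Min_le) (auto simp: G_def)
  also have "\<dots> \<le> (\<Sum>p\<in>P. 2 * r p)" unfolding ftcost_def using Sb by (intro sum_mono) auto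
  also have "\<dots> = 2 * Min F" by (simp add: OPT ftcost_def r_def sum_distrib_left)
  finally have medb: "Min G \<le> 2 * Min F" .
  have fQ: "finite Q" using assms(7) fP finite_subset by blast
  have fC: "finite C" using assms(10) fP finite_subset by blast
  have Cb: "kdist C p l \<le> 2 * kdist Q p 1 + r p" if p: "p \<in> P" for p
  proof -
    have "1 \<le> card Q" using assms(8) m1 m_def by simp
    hence "1 \<le> card {s\<in>Q. dist p s \<le> kdist Q p 1}" using kdist_attain[OF fQ] by blast
    hence "{s\<in>Q. dist p s \<le> kdist Q p 1} \<noteq> {}" by (metis card.empty not_one_le_zero)
    then obtain q where q: "q \<in> Q" "dist p q \<le> kdist Q p 1" by blast
    have lP: "l \<le> card P" using assms(4,5) by simp
    have a1: "kdist C p l \<le> dist p q + kdist C q l" using kdist_tri[OF fC] assms(11,4) by simp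
    have nn: "l \<le> card (nnset ix P q l)" "\<forall>s\<in>nnset ix P q l. dist q s \<le> kdist P q l"
      using nnset_props[OF fP assms(2) lP] by auto
    have "card (nnset ix P q l) \<le> card {s\<in>C. dist q s \<le> kdist P q l}"
      using fC nn(2) assms(12) q(1) by (intro card_mono) auto
    hence a2: "kdist C q l \<le> kdist P q l"
      using nn(1) kdist_attain[OF fP lP, of q] by (intro kdist_le) auto
    have a3: "kdist P q l \<le> dist q p + kdist P p l" using kdist_tri[OF fP lP] .
    have a4: "kdist P p l \<le> r p" unfolding r_def using kdist_mono[OF fP Cs(1) lCs] .
    show ?thesis using a1 a2 a3 a4 q(2) by (simp add: dist_commute)
  qed
  have "ftcost P C l \<le> (\<Sum>p\<in>P. 2 * kdist Q p 1 + r p)"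
    unfolding ftcost_def using Cb by (intro sum_mono) auto
  also have "\<dots> = 2 * ftcost P Q 1 + Min F"
    by (simp add: OPT ftcost_def r_def sum.distrib sum_distrib_left)
  also have "\<dots> \<le> 2 * (c * Min G) + Min F" using assms(9) G_def by simp
  also have "\<dots> \<le> 2 * (c * (2 * Min F)) + Min F"
    using medb assms(6) by (simp add: mult_left_mono)
  also have "\<dots> = (1 + 4 * c) * Min F" by (simp add: algebra_simps)
  finally show ?thesis unfolding F_def .
qed

end
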